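(* For $0<r_\varepsilon,r'_\varepsilon<1$ ($\varepsilon=+,-,0$) and $\mu_i,\mu'_i\in[0,2\pi)$ ($i=1,2,3$), let \begin{align*} U_{r,\mu}={}&|e_1^{-1}\rangle\langle r_0e_1^0+e^{i\mu_1}s_0e_2^0|+|e_2^{1}\rangle\langle -e^{i\mu_2}s_0e_1^0+e^{i(\mu_1+\mu_2)}r_0e_2^0|\\ &+\sum_{n\ge1}|e_1^{n-1}\rangle\langle r_+e_1^n+s_+e_2^n|+|e_2^{n+1}\rangle\langle -e^{i\mu_3}s_+e_1^n+e^{i\mu_3}r_+e_2^n|\\ &+\sum_{n\le-1}|e_1^{n-1}\rangle\langle r_-e_1^n+s_-e_2^n|+|e_2^{n+1}\rangle\langle -s_-e_1^n+r_-e_2^n|, \end{align*} with $s_\varepsilon=\sqrt{1-r_\varepsilon^2}$, where $r=(r_+,r_-,r_0)$, $\mu=(\mu_1,\mu_2,\mu_3)$, and define $U_{r',\mu'}$ analogously. Then $U_{r,\mu}$ and $U_{r',\mu'}$ are unitary equivalent if and only if $r=r'$ and $\mu=\mu'$.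
   Context: Let $\mathcal H_n=\mathbb C^2$ for $n\in\mathbb Z$, $\mathcal H=\bigoplus_{n\in\mathbb Z}\mathcal H_n$, and $\{e_1^n,e_2^n\}$ the standard basis of $\mathcal H_n$. Dirac notation: $|x\rangle\langle y|$ is the operator $z\mapsto\langle y,z\rangle x$ (inner product conjugate-linear in the first argument). Since a unitary $U$ and $e^{i\lambda}U$ are identified, unitaries $U_1,U_2$ on $\mathcal H$ are called unitary equivalent if there exist $\lambda\in\mathbb R$ and a unitary $W=\bigoplus_nW_n$ ($W_n$ unitary on $\mathcal H_n$) with $e^{i\lambda}WU_1W^*=U_2$. *)

theory Defs
  imports "HOL-Analysis.Analysis"
begin

text \<open>Vectors of H = direct sum over n in Z of C^2 are represented by their
coordinates x n a (a in {1,2}); operators by their matrix entries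
M (m,a) (n,b) = <e_a^m, M e_b^n>.\<close>

type_synonym hvec = "int \<Rightarrow> nat \<Rightarrow> complex"
type_synonym hop = "int \<times> nat \<Rightarrow> int \<times> nat \<Rightarrow> complex"

definition ebasis :: "nat \<Rightarrow> int \<Rightarrow> hvec" where
  "ebasis a n = (\<lambda>m b. if m = n \<and> b = a then 1 else 0)"

definition ketbra :: "hvec \<Rightarrow> hvec \<Rightarrow> hop" where
  "ketbra x y = (\<lambda>(m,a) (n,b). x m a * cnj (y n b))"

definition vadd :: "hvec \<Rightarrow> hvec \<Rightarrow> hvec" where
  "vadd x y = (\<lambda>n a. x n a + y n a)"

definition vscale :: "complex \<Rightarrow> hvec \<Rightarrow> hvec" where
  "vscale c x = (\<lambda>n a. c * x n a)"

definition opadd :: "hop \<Rightarrow> hop \<Rightarrow> hop" where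
  "opadd A B = (\<lambda>i j. A i j + B i j)"

definition sval :: "real \<Rightarrow> real" where
  "sval r = sqrt (1 - r\<^sup>2)"

text \<open>The n-th summand of U_{r,mu} (the two rank-one terms whose bra-vectors are
supported in H_n). r = (r_+, r_-, r_0), mu = (mu_1, mu_2, mu_3).\<close>
definition Uterm :: "real \<times> real \<times> real \<Rightarrow> real \<times> real \<times> real \<Rightarrow> int \<Rightarrow> hop" where
  "Uterm r \<mu> n =
    (case r of (rp, rm, r0) \<Rightarrow> case \<mu> of (\<mu>1, \<mu>2, \<mu>3) \<Rightarrow>
     if n = 0 then
       opadd
        (ketbra (ebasis 1 (-1))
           (vadd (vscale (complex_of_real r0) (ebasis 1 0))
                 (vscale (exp (\<i> * \<mu>1) * complex_of_real (sval r0)) (ebasis 2 0))))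
        (ketbra (ebasis 2 1)
           (vadd (vscale (- exp (\<i> * \<mu>2) * complex_of_real (sval r0)) (ebasis 1 0))
                 (vscale (exp (\<i> * (\<mu>1 + \<mu>2)) * complex_of_real r0) (ebasis 2 0))))
     else if n \<ge> 1 then
       opadd
        (ketbra (ebasis 1 (n - 1))
           (vadd (vscale (complex_of_real rp) (ebasis 1 n))
                 (vscale (complex_of_real (sval rp)) (ebasis 2 n))))
        (ketbra (ebasis 2 (n + 1))
           (vadd (vscale (- exp (\<i> * \<mu>3) * complex_of_real (sval rp)) (ebasis 1 n))
                 (vscale (exp (\<i> * \<mu>3) * complex_of_real rp) (ebasis 2 n))))
     else
       opadd
        (ketbra (ebasis 1 (n - 1))
           (vadd (vscale (complex_of_real rm) (ebasis 1 n))
                 (vscale (complex_of_real (sval rm)) (ebasis 2 n))))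
        (ketbra (ebasis 2 (n + 1))
           (vadd (vscale (- complex_of_real (sval rm)) (ebasis 1 n))
                 (vscale (complex_of_real rm) (ebasis 2 n)))))"

text \<open>U_{r,mu} = sum over n of Uterm r mu n. Since the n-th summand has nonzero
matrix entries only in the columns (n,b), the entry in column (n,b) of the
(pointwise convergent) sum equals the entry of the n-th summand.\<close>
definition Uop :: "real \<times> real \<times> real \<Rightarrow> real \<times> real \<times> real \<Rightarrow> hop" where
  "Uop r \<mu> = (\<lambda>(m,a) (n,b). Uterm r \<mu> n (m,a) (n,b))"

definition unitary2 :: "(nat \<Rightarrow> nat \<Rightarrow> complex) \<Rightarrow> bool" where
  "unitary2 A \<longleftrightarrow> (\<forall>i\<in>{1,2}. \<forall>j\<in>{1,2}.
      (\<Sum>k\<in>{1,2}. A i k * cnj (A j k)) = (if i = j then 1 else 0))"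

text \<open>Matrix entries of W U W^* for block diagonal W = direct sum of W_n.\<close>
definition conj_block :: "(int \<Rightarrow> nat \<Rightarrow> nat \<Rightarrow> complex) \<Rightarrow> hop \<Rightarrow> hop" where
  "conj_block W U = (\<lambda>(m,a) (n,b).
      \<Sum>c\<in>{1,2}. \<Sum>d\<in>{1,2}. W m a c * U (m,c) (n,d) * cnj (W n b d))"

definition unitary_equiv :: "hop \<Rightarrow> hop \<Rightarrow> bool" where
  "unitary_equiv U1 U2 \<longleftrightarrow>
    (\<exists>(lam::real) (W :: int \<Rightarrow> nat \<Rightarrow> nat \<Rightarrow> complex).
       (\<forall>n. unitary2 (W n)) \<and>
       (\<forall>m n. \<forall>a\<in>{1,2}. \<forall>b\<in>{1,2}.
          exp (\<i> * complex_of_real lam) * conj_block W U1 (m,a) (n,b) = U2 (m,a) (n,b)))"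

end

theory Submission
  imports Defs
begin

lemmas Udefs = Uop_def Uterm_def opadd_def ketbra_def ebasis_def vadd_def vscale_def

lemma U_zero: assumes "\<not> (m = n - 1 \<and> a = 1)" "\<not> (m = n + 1 \<and> a = 2)"
  shows "Uop r \<mu> (m,a) (n,b) = 0"
  using assms by (cases r; cases \<mu>) (auto simp: Udefs)

lemma U_A: "Uop (rp,rm,r0) \<mu> (n-1,1) (n,1) = complex_of_real (if n = 0 then r0 else if n \<ge> 1 then rp else rm)"
  by (cases \<mu>) (auto simp: Udefs)

lemma U_D: "rp \<noteq> 0 \<Longrightarrow> rm \<noteq> 0 \<Longrightarrow> r0 \<noteq> 0 \<Longrightarrow> Uop (rp,rm,r0) \<mu> (n+1,2) (n,2) \<noteq> 0"
  by (cases \<mu>) (auto simp: Udefs)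

lemma lin2:
  assumes u: "unitary2 A" and e1: "p1 * cnj (A 1 1) + p2 * cnj (A 1 2) = 0"
    and e2: "p1 * cnj (A 2 1) + p2 * cnj (A 2 2) = 0"
  shows "p1 = 0 \<and> p2 = 0"
proof -
  have n1: "A 1 1 * cnj (A 1 1) + A 1 2 * cnj (A 1 2) = 1"
    and n2: "A 2 1 * cnj (A 2 1) + A 2 2 * cnj (A 2 2) = 1"
    and o: "A 1 1 * cnj (A 2 1) + A 1 2 * cnj (A 2 2) = 0"
    using u unfolding unitary2_def by auto
  define D where "D = A 1 1 * A 2 2 - A 1 2 * A 2 1"
  have "D * cnj D = (A 1 1 * cnj (A 1 1) + A 1 2 * cnj (A 1 2)) * (A 2 1 * cnj (A 2 1) + A 2 2 * cnj (A 2 2))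
     - (A 1 1 * cnj (A 2 1) + A 1 2 * cnj (A 2 2)) * cnj (A 1 1 * cnj (A 2 1) + A 1 2 * cnj (A 2 2))"
    unfolding D_def by (simp add: algebra_simps)
  hence "D * cnj D = 1" using n1 n2 o by simp
  hence D0: "cnj D \<noteq> 0" by auto
  have "p1 * cnj D = (p1 * cnj (A 1 1) + p2 * cnj (A 1 2)) * cnj (A 2 2) - (p1 * cnj (A 2 1) + p2 * cnj (A 2 2)) * cnj (A 1 2)"
    unfolding D_def by (simp add: algebra_simps)
  hence "p1 = 0" using e1 e2 D0 by simp
  moreover have "- p2 * cnj D = (p1 * cnj (A 1 1) + p2 * cnj (A 1 2)) * cnj (A 2 1) - (p1 * cnj (A 2 1) + p2 * cnj (A 2 2)) * cnj (A 1 1)"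
    unfolding D_def by (simp add: algebra_simps)
  hence "p2 = 0" using e1 e2 D0 by simp
  ultimately show ?thesis by simp
qed

lemma sum12: "(\<Sum>k\<in>{1::nat,2}. f k) = f 1 + f 2" by simp

lemma diag:
  assumes u: "\<forall>n. unitary2 (W n)" and c: "c \<noteq> 0"
    and eq: "\<forall>m n. \<forall>a\<in>{1,2}. \<forall>b\<in>{1,2}. c * conj_block W (Uop (rp,rm,r0) \<mu>) (m,a) (n,b) = Uop r' \<mu>' (m,a) (n,b)"
    and r: "rp \<noteq> 0" "rm \<noteq> 0" "r0 \<noteq> 0"
  shows "W k 2 1 = 0 \<and> W k 1 2 = 0"
proof
  let ?U = "Uop (rp,rm,r0) \<mu>"
  show "W k 2 1 = 0"
  proof (rule ccontr)
    assume nz: "W k 2 1 \<noteq> 0"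
    have "?U (k,1) (k+1,1) * cnj (W (k+1) b 1) + ?U (k,1) (k+1,2) * cnj (W (k+1) b 2) = 0"
      if b: "b \<in> {1,2}" for b
    proof -
      have z: "?U (k,2) (k+1,d) = 0" for d by (rule U_zero) auto
      have "Uop r' \<mu>' (k,2) (k+1,b) = 0" by (rule U_zero) auto
      hence "c * conj_block W ?U (k,2) (k+1,b) = 0" using eq[rule_format, where m=k and n="k+1" and a=2 and b=b] b by simp
      hence "conj_block W ?U (k,2) (k+1,b) = 0" using c by simp
      hence "W k 2 1 * (?U (k,1) (k+1,1) * cnj (W (k+1) b 1) + ?U (k,1) (k+1,2) * cnj (W (k+1) b 2)) = 0"
        unfolding conj_block_def sum12 using z by (simp add: algebra_simps)
      thus ?thesis using nz by simp
    qed
    hence "?U (k,1) (k+1,1) = 0" using lin2 u by blast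
    moreover have "?U (k,1) (k+1,1) \<noteq> 0" using U_A[of rp rm r0 \<mu> "k+1"] r by auto
    ultimately show False by simp
  qed
  show "W k 1 2 = 0"
  proof (rule ccontr)
    assume nz: "W k 1 2 \<noteq> 0"
    have "?U (k,2) (k-1,1) * cnj (W (k-1) b 1) + ?U (k,2) (k-1,2) * cnj (W (k-1) b 2) = 0"
      if b: "b \<in> {1,2}" for b
    proof -
      have z: "?U (k,1) (k-1,d) = 0" for d by (rule U_zero) auto
      have "Uop r' \<mu>' (k,1) (k-1,b) = 0" by (rule U_zero) auto
      hence "c * conj_block W ?U (k,1) (k-1,b) = 0" using eq[rule_format, where m=k and n="k-1" and a=1 and b=b] b by simp
      hence "conj_block W ?U (k,1) (k-1,b) = 0" using c by simp
      hence "W k 1 2 * (?U (k,2) (k-1,1) * cnj (W (k-1) b 1) + ?U (k,2) (k-1,2) * cnj (W (k-1) b 2)) = 0"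
        unfolding conj_block_def sum12 using z by (simp add: algebra_simps)
      thus ?thesis using nz by simp
    qed
    hence "?U (k,2) (k-1,2) = 0" using lin2 u by blast
    moreover have "?U (k,2) (k-1,2) \<noteq> 0" using U_D[of rp rm r0 \<mu> "k-1"] r by auto
    ultimately show False by simp
  qed
qed

lemma cb_diag:
  assumes "\<forall>k. W k 2 1 = 0 \<and> W k 1 2 = 0" "a \<in> {1,2}" "b \<in> {1,2}"
  shows "conj_block W U (m,a) (n,b) = W m a a * U (m,a) (n,b) * cnj (W n b b)"
  using assms unfolding conj_block_def sum12 by auto

lemma ph:
  fixes c x y p p' s :: complex
  assumes "c * (y * (- (p * s)) * cnj x) = - (p' * s)" "c * (x * s * cnj y) = s"
    "x * cnj x = 1" "y * cnj y = 1" "s \<noteq> 0"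
  shows "c * c * p = p'"
proof -
  have "(c * (y * (- (p * s)) * cnj x)) * (c * (x * s * cnj y)) = (- (p' * s)) * s"
    using assms(1,2) by (simp only:)
  moreover have "(c * (y * (- (p * s)) * cnj x)) * (c * (x * s * cnj y)) = - ((c * c * p) * (s * s) * ((x * cnj x) * (y * cnj y)))"
    by (simp add: algebra_simps)
  ultimately have "(c * c * p) * (s * s) * ((x * cnj x) * (y * cnj y)) = p' * (s * s)"
    by (simp add: algebra_simps)
  hence "(c * c * p) * (s * s) = p' * (s * s)" using assms(3,4) by simp
  thus ?thesis using assms(5) by simp
qed

lemma ph2:
  fixes c x y p p' q q' s t :: complex
  assumes "c * (y * (- (p * s)) * cnj x) = - (p' * s)" "c * (x * (q * t) * cnj y) = q' * t"
    "x * cnj x = 1" "y * cnj y = 1" "s \<noteq> 0" "t \<noteq> 0"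
  shows "c * c * p * q = p' * q'"
proof -
  have "(c * (y * (- (p * s)) * cnj x)) * (c * (x * (q * t) * cnj y)) = (- (p' * s)) * (q' * t)"
    using assms(1,2) by (simp only:)
  moreover have "(c * (y * (- (p * s)) * cnj x)) * (c * (x * (q * t) * cnj y)) = - ((c * c * p * q) * (s * t) * ((x * cnj x) * (y * cnj y)))"
    by (simp add: algebra_simps)
  ultimately have "(c * c * p * q) * (s * t) * ((x * cnj x) * (y * cnj y)) = (p' * q') * (s * t)"
    by (simp add: algebra_simps)
  hence "(c * c * p * q) * (s * t) = (p' * q') * (s * t)" using assms(3,4) by simp
  thus ?thesis using assms(5,6) by simp
qed

lemma nrm:
  fixes c x y :: complex
  assumes "norm c = 1" "norm x = 1" "norm y = 1"
    "c * (x * complex_of_real r * cnj y) = complex_of_real r'" "0 < r" "0 < r'"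
  shows "r = r'"
proof -
  have "norm (c * (x * complex_of_real r * cnj y)) = norm (complex_of_real r')" using assms(4) by simp
  moreover have "norm (c * (x * complex_of_real r * cnj y)) = norm c * (norm x * \<bar>r\<bar> * norm (cnj y))"
    by (simp add: norm_mult)
  ultimately show ?thesis using assms by simp
qed

lemma angle_eq:
  assumes "exp (\<i> * complex_of_real a) = exp (\<i> * complex_of_real b)"
    "0 \<le> a" "a < 2*pi" "0 \<le> b" "b < 2*pi"
  shows "a = b"
proof -
  obtain n :: int where "\<i> * complex_of_real a = \<i> * complex_of_real b + (of_int (2 * n) * pi) * \<i>"
    using assms(1) exp_eq by blast
  hence "Im (\<i> * complex_of_real a) = Im (\<i> * complex_of_real b + (of_int (2 * n) * pi) * \<i>)" by simp
  hence e: "a = b + 2 * real_of_int n * pi" by simp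
  have "n = 0"
  proof (rule ccontr)
    assume "n \<noteq> 0"
    hence "n \<ge> 1 \<or> n \<le> -1" by auto
    thus False
    proof
      assume "n \<ge> 1" hence "2 * real_of_int n * pi \<ge> 2 * pi" by simp
      thus False using e assms by linarith
    next
      assume "n \<le> -1" hence "real_of_int n \<le> -1" by simp
      hence "pi * real_of_int n \<le> pi * (-1)" by (rule mult_left_mono) simp
      hence "2 * real_of_int n * pi \<le> - 2 * pi" by simp
      thus False using e assms by linarith
    qed
  qed
  thus ?thesis using e by simp
qed

lemma sval_pos: "0 < r \<Longrightarrow> r < 1 \<Longrightarrow> 0 < sval r"
  unfolding sval_def by (simp add: power_less_one_iff abs_square_less_1)


theorem theorem2p8:
  fixes rp rm r0 rp' rm' r0' \<mu>1 \<mu>2 \<mu>3 \<mu>1' \<mu>2' \<mu>3' :: real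
  assumes "0 < rp" "rp < 1" "0 < rm" "rm < 1" "0 < r0" "r0 < 1"
    and "0 < rp'" "rp' < 1" "0 < rm'" "rm' < 1" "0 < r0'" "r0' < 1"
    and "\<forall>x\<in>{\<mu>1, \<mu>2, \<mu>3, \<mu>1', \<mu>2', \<mu>3'}. 0 \<le> x \<and> x < 2 * pi"
  shows "unitary_equiv (Uop (rp, rm, r0) (\<mu>1, \<mu>2, \<mu>3)) (Uop (rp', rm', r0') (\<mu>1', \<mu>2', \<mu>3'))
     \<longleftrightarrow> (rp, rm, r0) = (rp', rm', r0') \<and> (\<mu>1, \<mu>2, \<mu>3) = (\<mu>1', \<mu>2', \<mu>3')"
proof
  assume "(rp, rm, r0) = (rp', rm', r0') \<and> (\<mu>1, \<mu>2, \<mu>3) = (\<mu>1', \<mu>2', \<mu>3')"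
  thus "unitary_equiv (Uop (rp, rm, r0) (\<mu>1, \<mu>2, \<mu>3)) (Uop (rp', rm', r0') (\<mu>1', \<mu>2', \<mu>3'))"
    unfolding unitary_equiv_def
    apply (intro exI[of _ 0] exI[of _ "\<lambda>n i j. if i = j then 1 else 0"])
    by (auto simp: unitary2_def conj_block_def)
next
  let ?U = "Uop (rp, rm, r0) (\<mu>1, \<mu>2, \<mu>3)"
  let ?U' = "Uop (rp', rm', r0') (\<mu>1', \<mu>2', \<mu>3')"
  assume "unitary_equiv ?U ?U'"
  then obtain lam W where u: "\<forall>n. unitary2 (W n)"
    and eq: "\<forall>m n. \<forall>a\<in>{1,2}. \<forall>b\<in>{1,2}. exp (\<i> * complex_of_real lam) * conj_block W ?U (m,a) (n,b) = ?U' (m,a) (n,b)"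
    unfolding unitary_equiv_def by blast
  define c where "c = exp (\<i> * complex_of_real lam)"
  have cn: "norm c = 1" unfolding c_def by simp
  hence c0: "c \<noteq> 0" by auto
  have dg: "\<forall>k. W k 2 1 = 0 \<and> W k 1 2 = 0"
    using diag[OF u c0 eq[folded c_def]] assms by auto
  define x where "x n = W n 1 1" for n
  define y where "y n = W n 2 2" for n
  have xx: "x n * cnj (x n) = 1" for n
    using u dg unfolding unitary2_def x_def by (auto simp: sum12)
  have yy: "y n * cnj (y n) = 1" for n
    using u dg unfolding unitary2_def y_def by (auto simp: sum12)
  have xn: "norm (x n) = 1" for n
  proof -
    have "complex_of_real (norm (x n)^2) = 1" using xx[of n] by (simp only: complex_norm_square)
    hence "norm (x n)^2 = 1" by (simp only: of_real_eq_1_iff)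
    thus ?thesis using norm_ge_zero[of "x n"] by (simp add: power2_eq_1_iff)
  qed
  have yn: "norm (y n) = 1" for n
  proof -
    have "complex_of_real (norm (y n)^2) = 1" using yy[of n] by (simp only: complex_norm_square)
    hence "norm (y n)^2 = 1" by (simp only: of_real_eq_1_iff)
    thus ?thesis using norm_ge_zero[of "y n"] by (simp add: power2_eq_1_iff)
  qed
  have E: "c * (W m a a * ?U (m,a) (n,b) * cnj (W n b b)) = ?U' (m,a) (n,b)"
    if "a \<in> {1,2}" "b \<in> {1,2}" for m n a b
    using eq[rule_format, where m=m and n=n and a=a and b=b] that cb_diag[OF dg that]
    unfolding c_def by simp
  have "c * (x 0 * complex_of_real rp * cnj (x 1)) = complex_of_real rp'"
    using E[where m=0 and a=1 and n=1 and b=1] unfolding x_def by (simp add: Udefs)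
  hence rpe: "rp = rp'" using nrm[OF cn xn xn] assms by blast
  have "c * (x (-1) * complex_of_real r0 * cnj (x 0)) = complex_of_real r0'"
    using E[where m="-1" and a=1 and n=0 and b=1] unfolding x_def by (simp add: Udefs)
  hence r0e: "r0 = r0'" using nrm[OF cn xn xn] assms by blast
  have "c * (x (-2) * complex_of_real rm * cnj (x (-1))) = complex_of_real rm'"
    using E[where m="-2" and a=1 and n="-1" and b=1] unfolding x_def by (simp add: Udefs)
  hence rme: "rm = rm'" using nrm[OF cn xn xn] assms by blast
  define sp where "sp = complex_of_real (sval rp')"
  define sm where "sm = complex_of_real (sval rm')"
  define s0 where "s0 = complex_of_real (sval r0')"
  have sp0: "sp \<noteq> 0" "sm \<noteq> 0" "s0 \<noteq> 0"
    unfolding sp_def sm_def s0_def using sval_pos assms by (metis of_real_eq_0_iff less_irrefl)+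
  note simps = Udefs rpe r0e rme x_def y_def sp_def sm_def s0_def
  have "c * (y (-1) * (- (1 * sm)) * cnj (x (-2))) = - (1 * sm)"
    using E[where m="-1" and a=2 and n="-2" and b=1] by (simp add: simps)
  moreover have "c * (x (-2) * (1 * sm) * cnj (y (-1))) = 1 * sm"
    using E[where m="-2" and a=1 and n="-1" and b=2] by (simp add: simps)
  ultimately have "c * c * 1 * 1 = 1 * 1" using ph2 xx yy sp0 by blast
  hence cc: "c * c = 1" by simp
  have "c * (y 0 * (- (1 * sm)) * cnj (x (-1))) = - (1 * sm)"
    using E[where m=0 and a=2 and n="-1" and b=1] by (simp add: simps)
  moreover have "c * (x (-1) * (cnj (exp (\<i> * complex_of_real \<mu>1)) * s0) * cnj (y 0)) = cnj (exp (\<i> * complex_of_real \<mu>1')) * s0"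
    using E[where m="-1" and a=1 and n=0 and b=2] by (simp add: simps)
  ultimately have "c * c * 1 * cnj (exp (\<i> * complex_of_real \<mu>1)) = 1 * cnj (exp (\<i> * complex_of_real \<mu>1'))"
    using ph2 xx yy sp0 by blast
  hence "exp (\<i> * complex_of_real \<mu>1) = exp (\<i> * complex_of_real \<mu>1')" using cc by simp
  hence m1: "\<mu>1 = \<mu>1'" using angle_eq assms(13) by auto
  have "c * (y 1 * (- (cnj (exp (\<i> * complex_of_real \<mu>2)) * s0)) * cnj (x 0)) = - (cnj (exp (\<i> * complex_of_real \<mu>2')) * s0)"
    using E[where m=1 and a=2 and n=0 and b=1] by (simp add: simps)
  moreover have "c * (x 0 * (1 * sp) * cnj (y 1)) = 1 * sp"
    using E[where m=0 and a=1 and n=1 and b=2] by (simp add: simps)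
  ultimately have "c * c * cnj (exp (\<i> * complex_of_real \<mu>2)) * 1 = cnj (exp (\<i> * complex_of_real \<mu>2')) * 1"
    using ph2 xx yy sp0 by blast
  hence "exp (\<i> * complex_of_real \<mu>2) = exp (\<i> * complex_of_real \<mu>2')" using cc by simp
  hence m2: "\<mu>2 = \<mu>2'" using angle_eq assms(13) by auto
  have "c * (y 2 * (- (cnj (exp (\<i> * complex_of_real \<mu>3)) * sp)) * cnj (x 1)) = - (cnj (exp (\<i> * complex_of_real \<mu>3')) * sp)"
    using E[where m=2 and a=2 and n=1 and b=1] by (simp add: simps)
  moreover have "c * (x 1 * (1 * sp) * cnj (y 2)) = 1 * sp"
    using E[where m=1 and a=1 and n=2 and b=2] by (simp add: simps)
  ultimately have "c * c * cnj (exp (\<i> * complex_of_real \<mu>3)) * 1 = cnj (exp (\<i> * complex_of_real \<mu>3')) * 1"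
    using ph2 xx yy sp0 by blast
  hence "exp (\<i> * complex_of_real \<mu>3) = exp (\<i> * complex_of_real \<mu>3')" using cc by simp
  hence m3: "\<mu>3 = \<mu>3'" using angle_eq assms(13) by auto
  show "(rp, rm, r0) = (rp', rm', r0') \<and> (\<mu>1, \<mu>2, \<mu>3) = (\<mu>1', \<mu>2', \<mu>3')"
    using rpe rme r0e m1 m2 m3 by simp
qed

end
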